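(* Let $\alpha<\beta$ be positive integers. There is no function $f:\mathbb{N}\to\mathbb{N}$ such that $\mathrm{ecrw}_\alpha(G)\le f(\mathrm{ecrw}_\beta(G))$ for all graphs $G$. (Indeed, the graphs $G^{\alpha+1}_n$, $n\in\mathbb{N}$, have $\beta$-edge-crossing width $0$ and unbounded $\alpha$-edge-crossing width.)
   Context: For positive integers $n,k$, the graph $G^n_k$ has vertex set $A\cup B_k$ where $A=\{a_1,\dots,a_n\}$ and $B_k=\{(W,\ell): W\subseteq A,\ |W|=2,\ \ell\in[k]\}$, with $a\in A$ adjacent to $(W,\ell)$ iff $a\in W$, and no other edges. A tree-cut decomposition of a graph $G$ is a pair $\mathcal{T}=(T,\{X_t\}_{t\in V(T)})$ where $T$ is a tree and the bags $X_t\subseteq V(G)$ are pairwise disjoint (possibly empty) with $\bigcup_{t\in V(T)}X_t=V(G)$. For a node $t$ of $T$, let $T_1,\dots,T_m$ be the connected components of $T-t$ and $Z_i=\bigcup_{s\in V(T_i)}X_s$; $\mathrm{cross}_{\mathcal{T}}(t)$ is the number of edges of $G$ whose two endpoints lie in two distinct sets among $Z_1,\dots,Z_m$ (if $T$ has one node, $\mathrm{cross}_{\mathcal T}(t)=0$). The crossing number of $\mathcal{T}$ is $\max_{t}\mathrm{cross}_{\mathcal{T}}(t)$, and the thickness of $\mathcal{T}$ is $\max_t|X_t|$. $\mathrm{ecrw}_\alpha(G)$ is the minimum crossing number over tree-cut decompositions of $G$ of thickness at most $\alpha$. *)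

theory Defs
  imports Main
begin

definition graph :: "nat set \<Rightarrow> nat set set \<Rightarrow> bool" where
  "graph V E \<longleftrightarrow> finite V \<and> (\<forall>e\<in>E. \<exists>u v. e = {u, v} \<and> u \<noteq> v \<and> u \<in> V \<and> v \<in> V)"

definition adj_rel :: "nat set set \<Rightarrow> nat set \<Rightarrow> (nat \<times> nat) set" where
  "adj_rel ET S = {(x, y). x \<in> S \<and> y \<in> S \<and> {x, y} \<in> ET}"

definition is_tree :: "nat set \<Rightarrow> nat set set \<Rightarrow> bool" where
  "is_tree N ET \<longleftrightarrow> finite N \<and> N \<noteq> {} \<and> graph N ET
     \<and> (\<forall>s\<in>N. \<forall>t\<in>N. (s, t) \<in> (adj_rel ET N)\<^sup>*)
     \<and> \<not> (\<exists>cs. 3 \<le> length cs \<and> distinct cs \<and>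
              (\<forall>i<length cs. {cs ! i, cs ! ((i + 1) mod length cs)} \<in> ET))"

definition tree_cut_dec :: "nat set \<Rightarrow> nat set set \<Rightarrow> nat set \<Rightarrow> nat set set \<Rightarrow> (nat \<Rightarrow> nat set) \<Rightarrow> bool" where
  "tree_cut_dec V E N ET X \<longleftrightarrow> is_tree N ET
     \<and> (\<forall>s\<in>N. \<forall>t\<in>N. s \<noteq> t \<longrightarrow> X s \<inter> X t = {})
     \<and> (\<Union>t\<in>N. X t) = V"

definition cross :: "nat set set \<Rightarrow> nat set \<Rightarrow> nat set set \<Rightarrow> (nat \<Rightarrow> nat set) \<Rightarrow> nat \<Rightarrow> nat" where
  "cross E N ET X t = card {e \<in> E. \<exists>u v s s'. e = {u, v} \<and> s \<in> N - {t} \<and> s' \<in> N - {t}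
       \<and> u \<in> X s \<and> v \<in> X s' \<and> (s, s') \<notin> (adj_rel ET (N - {t}))\<^sup>*}"

definition crossing_number :: "nat set set \<Rightarrow> nat set \<Rightarrow> nat set set \<Rightarrow> (nat \<Rightarrow> nat set) \<Rightarrow> nat" where
  "crossing_number E N ET X = Max (cross E N ET X ` N)"

definition thickness :: "nat set \<Rightarrow> (nat \<Rightarrow> nat set) \<Rightarrow> nat" where
  "thickness N X = Max ((\<lambda>t. card (X t)) ` N)"

definition ecrw :: "nat \<Rightarrow> nat set \<Rightarrow> nat set set \<Rightarrow> nat" where
  "ecrw \<alpha> V E = Inf {crossing_number E N ET X | N ET X.
       tree_cut_dec V E N ET X \<and> thickness N X \<le> \<alpha>}"

end

theory Submission
  imports Defs
begin

lemma adj_sym: "(x,y) \<in> (adj_rel ET S)\<^sup>* \<Longrightarrow> (y,x) \<in> (adj_rel ET S)\<^sup>*"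
proof -
  have "(adj_rel ET S)\<inverse> = adj_rel ET S" by (auto simp: adj_rel_def insert_commute)
  moreover assume "(x,y) \<in> (adj_rel ET S)\<^sup>*"
  ultimately show ?thesis by (metis rtrancl_converseI)
qed

lemma adj_mono: "ET \<subseteq> ET' \<Longrightarrow> S \<subseteq> S' \<Longrightarrow> (x,y) \<in> (adj_rel ET S)\<^sup>* \<Longrightarrow> (x,y) \<in> (adj_rel ET' S')\<^sup>*"
proof -
  assume a: "ET \<subseteq> ET'" "S \<subseteq> S'" "(x,y) \<in> (adj_rel ET S)\<^sup>*"
  have "adj_rel ET S \<subseteq> adj_rel ET' S'" using a(1,2) by (auto simp: adj_rel_def)
  then show ?thesis using a(3) rtrancl_mono by blast
qed

lemma first_step:
  assumes "(p,z) \<in> (adj_rel ET N)\<^sup>*"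
  shows "z = p \<or> (\<exists>w\<in>N. {p,w} \<in> ET \<and> w \<noteq> p \<and> (w,z) \<in> (adj_rel ET (N-{p}))\<^sup>*)"
  using assms
proof (induction rule: rtrancl_induct)
  case base then show ?case by simp
next
  case (step y z)
  then have yz: "y \<in> N" "z \<in> N" "{y,z} \<in> ET" by (auto simp: adj_rel_def)
  show ?case
  proof (cases "z = p")
    case True then show ?thesis by simp
  next
    case False
    show ?thesis
    proof (cases "y = p")
      case True then show ?thesis using yz False by auto
    next
      case ny: False
      then obtain w where w: "w\<in>N" "{p,w} \<in> ET" "w \<noteq> p" "(w,y) \<in> (adj_rel ET (N-{p}))\<^sup>*"
        using step.IH by auto
      have "(y,z) \<in> adj_rel ET (N-{p})" using yz ny False by (auto simp: adj_rel_def)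
      then show ?thesis using w by (meson rtrancl.rtrancl_into_rtrancl)
    qed
  qed
qed

lemma edge_lemma:
  assumes T: "is_tree N ET" and e: "{x,y} \<in> ET"
  shows "(y,x) \<notin> (adj_rel (ET - {{x,y}}) N)\<^sup>*"
proof
  define S where "S = adj_rel (ET - {{x,y}}) N"
  assume "(y,x) \<in> (adj_rel (ET - {{x,y}}) N)\<^sup>*"
  then have "\<exists>n. (y,x) \<in> S ^^ n" unfolding S_def using rtrancl_power by blast
  define n where "n = (LEAST n. (y,x) \<in> S ^^ n)"
  have nS: "(y,x) \<in> S ^^ n" unfolding n_def using \<open>\<exists>n. _\<close> by (rule LeastI_ex)
  have nmin: "\<And>m. (y,x) \<in> S ^^ m \<Longrightarrow> n \<le> m" unfolding n_def by (rule Least_le)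
  obtain f where f: "f 0 = y" "f n = x" "\<And>i. i < n \<Longrightarrow> (f i, f (Suc i)) \<in> S"
    using nS relpow_fun_conv by metis
  have xy: "x \<noteq> y" using T e unfolding is_tree_def graph_def
    by (metis doubleton_eq_iff insert_absorb2)
  have inj: "inj_on f {..n}"
  proof (rule ccontr)
    assume "\<not> inj_on f {..n}"
    then obtain i j where ij: "i < j" "j \<le> n" "f i = f j"
      unfolding inj_on_def by (metis atMost_iff linorder_neqE_nat)
    define g where "g k = (if k \<le> i then f k else f (k + (j - i)))" for k
    define m where "m = n - (j - i)"
    have "(y,x) \<in> S ^^ m"
      unfolding relpow_fun_conv
    proof (intro exI conjI allI impI)
      show "g 0 = y" using f by (simp add: g_def)
      show "g m = x"
      proof (cases "m \<le> i")
        case True then have "m = i" "j = n" using ij by (auto simp: m_def)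
        then show ?thesis using f ij by (simp add: g_def)
      next
        case False then show ?thesis using f ij by (simp add: g_def m_def)
      qed
      fix k assume k: "k < m"
      show "(g k, g (Suc k)) \<in> S"
      proof (cases "k < i")
        case True then show ?thesis using f(3)[of k] ij by (simp add: g_def)
      next
        case False
        show ?thesis
        proof (cases "k = i")
          case True
          then show ?thesis using f(3)[of j] ij k by (simp add: g_def m_def)
        next
          case False
          then show ?thesis using f(3)[of "k + (j-i)"] ij k \<open>\<not> k < i\<close> by (simp add: g_def m_def)
        qed
      qed
    qed
    then have "n \<le> m" by (rule nmin)
    then show False using ij unfolding m_def by linarith
  qed
  have n0: "n \<noteq> 0" using nS xy by (metis relpow_0_E)
  have n1: "n \<noteq> 1"
  proof
    assume "n = 1"
    then have "(y,x) \<in> S" using nS by simp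
    then show False unfolding S_def adj_rel_def by (auto simp: insert_commute)
  qed
  define cs where "cs = map f [0..<Suc n]"
  have "3 \<le> length cs" using n0 n1 by (simp add: cs_def)
  moreover have "distinct cs"
  proof -
    have "set [0..<Suc n] = {..n}" by auto
    then show ?thesis using inj unfolding cs_def distinct_map by (simp del: upt_Suc)
  qed
  moreover have "\<forall>i<length cs. {cs ! i, cs ! ((i + 1) mod length cs)} \<in> ET"
  proof (intro allI impI)
    fix i assume i: "i < length cs"
    show "{cs ! i, cs ! ((i + 1) mod length cs)} \<in> ET"
    proof (cases "i < n")
      case True
      then have "(f i, f (Suc i)) \<in> S" using f by simp
      then show ?thesis using True by (simp add: cs_def S_def adj_rel_def nth_append del: upt_Suc)
    next
      case False
      then have "i = n" using i by (simp add: cs_def)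
      then show ?thesis using f e by (simp add: cs_def insert_commute del: upt_Suc)
    qed
  qed
  ultimately show False using T unfolding is_tree_def by blast
qed

lemma sep_nonadj:
  assumes T: "is_tree N ET" and pq: "p \<in> N" "q \<in> N" "p \<noteq> q" "{p,q} \<notin> ET"
  shows "\<exists>t\<in>N. t \<noteq> p \<and> t \<noteq> q \<and> (p,q) \<notin> (adj_rel ET (N-{t}))\<^sup>*"
proof -
  have "(p,q) \<in> (adj_rel ET N)\<^sup>*" using T pq unfolding is_tree_def by blast
  then obtain w where w: "w\<in>N" "{p,w} \<in> ET" "w \<noteq> p" "(w,q) \<in> (adj_rel ET (N-{p}))\<^sup>*"
    using first_step pq(3) by metis
  have wq: "w \<noteq> q" using w pq by auto
  have "(p,q) \<notin> (adj_rel ET (N-{w}))\<^sup>*"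
  proof
    assume a: "(p,q) \<in> (adj_rel ET (N-{w}))\<^sup>*"
    define S where "S = adj_rel (ET - {{p,w}}) N"
    have s1: "adj_rel ET (N-{p}) \<subseteq> S" unfolding S_def adj_rel_def by (auto simp: doubleton_eq_iff)
    have s2: "adj_rel ET (N-{w}) \<subseteq> S" unfolding S_def adj_rel_def by (auto simp: doubleton_eq_iff)
    have "(w,q) \<in> S\<^sup>*" using w(4) s1 rtrancl_mono by blast
    moreover have "(p,q) \<in> S\<^sup>*" using a s2 rtrancl_mono by blast
    then have "(q,p) \<in> S\<^sup>*" unfolding S_def by (rule adj_sym)
    ultimately have "(w,p) \<in> S\<^sup>*" by simp
    then show False using edge_lemma[OF T w(2)] unfolding S_def by simp
  qed
  then show ?thesis using w wq by blast
qed

lemma sep_adj: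
  assumes T: "is_tree N ET" and e: "{p,q} \<in> ET"
    and a1: "(s,q) \<in> (adj_rel ET (N-{p}))\<^sup>*" and a2: "(s,p) \<in> (adj_rel ET (N-{q}))\<^sup>*"
  shows False
proof -
  define S where "S = adj_rel (ET - {{p,q}}) N"
  have s1: "adj_rel ET (N-{p}) \<subseteq> S" unfolding S_def adj_rel_def by (auto simp: doubleton_eq_iff)
  have s2: "adj_rel ET (N-{q}) \<subseteq> S" unfolding S_def adj_rel_def by (auto simp: doubleton_eq_iff)
  have "(s,q) \<in> S\<^sup>*" using a1 s1 rtrancl_mono by blast
  then have "(q,s) \<in> S\<^sup>*" unfolding S_def by (rule adj_sym)
  moreover have "(s,p) \<in> S\<^sup>*" using a2 s2 rtrancl_mono by blast
  ultimately have "(q,p) \<in> S\<^sup>*" by simp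
  then show False using edge_lemma[OF T e] unfolding S_def by simp
qed

definition starET :: "nat \<Rightarrow> nat set set" where
  "starET m = (\<lambda>i. {0,i}) ` {1..m}"

lemma starET_mem: "{a,b} \<in> starET m \<longleftrightarrow> (a = 0 \<and> 1 \<le> b \<and> b \<le> m) \<or> (b = 0 \<and> 1 \<le> a \<and> a \<le> m)"
  unfolding starET_def by (auto simp: doubleton_eq_iff)

lemma star_conn: "s \<le> m \<Longrightarrow> t \<le> m \<Longrightarrow> (s,t) \<in> (adj_rel (starET m) ({..m} - D))\<^sup>*"
  if "0 \<notin> D" "s \<notin> D" "t \<notin> D"
proof -
  assume st: "s \<le> m" "t \<le> m"
  have a: "(s,0) \<in> (adj_rel (starET m) ({..m} - D))\<^sup>*"
  proof (cases "s = 0")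
    case False
    then have "(s,0) \<in> adj_rel (starET m) ({..m} - D)" using st that
      by (auto simp: adj_rel_def starET_mem)
    then show ?thesis by blast
  qed simp
  have b: "(0,t) \<in> (adj_rel (starET m) ({..m} - D))\<^sup>*"
  proof (cases "t = 0")
    case False
    then have "(0,t) \<in> adj_rel (starET m) ({..m} - D)" using st that
      by (auto simp: adj_rel_def starET_mem)
    then show ?thesis by blast
  qed simp
  from a b show ?thesis by simp
qed

lemma star_tree: "is_tree {..m} (starET m)"
  unfolding is_tree_def
proof (intro conjI)
  show "finite {..m}" by simp
  show "{..m} \<noteq> {}" by auto
  show "graph {..m} (starET m)" unfolding graph_def starET_def by force
  show "\<forall>s\<in>{..m}. \<forall>t\<in>{..m}. (s, t) \<in> (adj_rel (starET m) {..m})\<^sup>*"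
    using star_conn[of "{}"] by simp
  show "\<not> (\<exists>cs. 3 \<le> length cs \<and> distinct cs \<and>
              (\<forall>i<length cs. {cs ! i, cs ! ((i + 1) mod length cs)} \<in> starET m))"
  proof
    assume "\<exists>cs. 3 \<le> length cs \<and> distinct cs \<and>
              (\<forall>i<length cs. {cs ! i, cs ! ((i + 1) mod length cs)} \<in> starET m)"
    then obtain cs where c: "3 \<le> length cs" "distinct cs"
      "\<And>i. i<length cs \<Longrightarrow> {cs ! i, cs ! ((i + 1) mod length cs)} \<in> starET m" by blast
    define L where "L = length cs"
    have z: "\<And>i. i < L \<Longrightarrow> cs ! i = 0 \<or> cs ! ((i + 1) mod L) = 0"
      using c(3) unfolding L_def by (metis starET_mem)
    have d: "\<And>i j. i < L \<Longrightarrow> j < L \<Longrightarrow> cs ! i = cs ! j \<Longrightarrow> i = j"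
      using c(2) unfolding L_def by (simp add: nth_eq_iff_index_eq)
    have L3: "3 \<le> L" using c(1) L_def by simp
    have z0: "cs ! 0 = 0 \<or> cs ! 1 = 0" using z[of 0] L3 by (simp add: eval_nat_numeral)
    have z1: "cs ! 1 = 0 \<or> cs ! 2 = 0" using z[of 1] L3 by (simp add: eval_nat_numeral)
    have z2: "cs ! 2 = 0 \<or> cs ! (3 mod L) = 0" using z[of 2] L3 by (simp add: eval_nat_numeral)
    have d01: "cs ! 0 \<noteq> cs ! 1" using d[of 0 1] L3 by auto
    have d02: "cs ! 0 \<noteq> cs ! 2" using d[of 0 2] L3 by auto
    have d12: "cs ! 1 \<noteq> cs ! 2" using d[of 1 2] L3 by auto
    show False
    proof (cases "L = 3")
      case True
      then show False using z0 z1 z2 d01 d02 d12 by auto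
    next
      case False
      then have "3 mod L = 3" using L3 by (simp add: eval_nat_numeral)
      moreover have "cs ! 1 \<noteq> cs ! 3" using d[of 1 3] L3 False by auto
      ultimately show False using z0 z1 z2 d01 d02 d12 by auto
    qed
  qed
qed

definition KV :: "nat \<Rightarrow> nat \<Rightarrow> nat set" where "KV n k = {..<n+k}"
definition KE :: "nat \<Rightarrow> nat \<Rightarrow> nat set set" where
  "KE n k = (\<lambda>(a,b). {a,b}) ` ({..<n} \<times> {n..<n+k})"

lemma KE_mem: "e \<in> KE n k \<longleftrightarrow> (\<exists>a b. e = {a,b} \<and> a < n \<and> n \<le> b \<and> b < n+k)"
  unfolding KE_def by force

lemma KE_fin: "finite (KE n k)" unfolding KE_def by simp

lemma K_graph: "graph (KV n k) (KE n k)"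
  unfolding graph_def KV_def using KE_mem by fastforce

lemma cross_zero:
  assumes "\<And>e. e \<in> E \<Longrightarrow> \<not> (\<exists>u v s s'. e = {u, v} \<and> s \<in> N - {t} \<and> s' \<in> N - {t}
       \<and> u \<in> X s \<and> v \<in> X s' \<and> (s, s') \<notin> (adj_rel ET (N - {t}))\<^sup>*)"
  shows "cross E N ET X t = 0"
  unfolding cross_def using assms by (intro card_eq_0_iff[THEN iffD2] disjI1) blast

lemma upper:
  assumes "n \<le> \<beta>" "1 \<le> \<beta>"
  shows "ecrw \<beta> (KV n k) (KE n k) = 0"
proof -
  define X where "X t = (if t = 0 then {..<n} else {n+t-1})" for t
  have tcd: "tree_cut_dec (KV n k) (KE n k) {..k} (starET k) X"
    unfolding tree_cut_dec_def
  proof (intro conjI)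
    show "is_tree {..k} (starET k)" by (rule star_tree)
    show "\<forall>s\<in>{..k}. \<forall>t\<in>{..k}. s \<noteq> t \<longrightarrow> X s \<inter> X t = {}" by (auto simp: X_def)
    show "(\<Union>t\<in>{..k}. X t) = KV n k"
    proof
      show "(\<Union>t\<in>{..k}. X t) \<subseteq> KV n k" by (auto simp: X_def KV_def split: if_splits)
      show "KV n k \<subseteq> (\<Union>t\<in>{..k}. X t)"
      proof
        fix x assume x: "x \<in> KV n k"
        show "x \<in> (\<Union>t\<in>{..k}. X t)"
        proof (cases "x < n")
          case True then show ?thesis by (intro UN_I[of 0]) (auto simp: X_def)
        next
          case False then show ?thesis using x by (intro UN_I[of "x - n + 1"]) (auto simp: X_def KV_def)
        qed
      qed
    qed
  qed
  have th: "thickness {..k} X \<le> \<beta>"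
    unfolding thickness_def using assms by (subst Max_le_iff) (auto simp: X_def)
  have cr: "cross (KE n k) {..k} (starET k) X t = 0" if t: "t \<in> {..k}" for t
  proof (rule cross_zero)
    fix e assume e: "e \<in> KE n k"
    show "\<not> (\<exists>u v s s'. e = {u, v} \<and> s \<in> {..k} - {t} \<and> s' \<in> {..k} - {t}
       \<and> u \<in> X s \<and> v \<in> X s' \<and> (s, s') \<notin> (adj_rel (starET k) ({..k} - {t}))\<^sup>*)"
    proof (cases "t = 0")
      case True
      then show ?thesis using e unfolding KE_mem X_def by (auto simp: doubleton_eq_iff)
    next
      case False
      have "(s, s') \<in> (adj_rel (starET k) ({..k} - {t}))\<^sup>*" if "s \<in> {..k} - {t}" "s' \<in> {..k} - {t}" for s s'
        using star_conn[where D="{t}" and s=s and t=s' and m=k] that False by auto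
      then show ?thesis by blast
    qed
  qed
  have "crossing_number (KE n k) {..k} (starET k) X = 0"
    unfolding crossing_number_def using cr by (subst Max_eq_iff) auto
  then have "ecrw \<beta> (KV n k) (KE n k) \<le> 0"
    unfolding ecrw_def using tcd th by (intro cInf_lower) auto
  then show ?thesis by simp
qed

lemma nonempty:
  assumes "1 \<le> \<alpha>"
  shows "{crossing_number E N ET X | N ET X.
       tree_cut_dec (KV n k) E N ET X \<and> thickness N X \<le> \<alpha>} \<noteq> {}"
proof -
  define X where "X t = (if t = 0 then {} else {t-1})" for t :: nat
  have tcd: "tree_cut_dec (KV n k) E {..n+k} (starET (n+k)) X"
    unfolding tree_cut_dec_def
  proof (intro conjI)
    show "is_tree {..n+k} (starET (n+k))" by (rule star_tree)
    show "\<forall>s\<in>{..n+k}. \<forall>t\<in>{..n+k}. s \<noteq> t \<longrightarrow> X s \<inter> X t = {}" by (auto simp: X_def)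
    show "(\<Union>t\<in>{..n+k}. X t) = KV n k"
    proof
      show "(\<Union>t\<in>{..n+k}. X t) \<subseteq> KV n k" by (auto simp: X_def KV_def split: if_splits)
      show "KV n k \<subseteq> (\<Union>t\<in>{..n+k}. X t)"
      proof
        fix x assume x: "x \<in> KV n k"
        then show "x \<in> (\<Union>t\<in>{..n+k}. X t)"
          by (intro UN_I[of "x + 1"]) (auto simp: X_def KV_def)
      qed
    qed
  qed
  have th: "thickness {..n+k} X \<le> \<alpha>"
    unfolding thickness_def using assms by (subst Max_le_iff) (auto simp: X_def)
  show ?thesis using tcd th by blast
qed

lemma cross_ge:
  assumes fin: "finite E" and aD: "a \<notin> D"
    and h: "\<And>b. b\<in>D \<Longrightarrow> {a,b} \<in> E \<and> (\<exists>u v s s'. {a,b} = {u,v} \<and> s\<in>N-{t} \<and> s'\<in>N-{t}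
              \<and> u\<in>X s \<and> v \<in> X s' \<and> (s,s') \<notin> (adj_rel ET (N-{t}))\<^sup>*)"
  shows "card D \<le> cross E N ET X t"
proof -
  have inj: "inj_on (\<lambda>b. {a,b}) D" using aD unfolding inj_on_def by (auto simp: doubleton_eq_iff)
  have "(\<lambda>b. {a,b}) ` D \<subseteq> {e \<in> E. \<exists>u v s s'. e = {u, v} \<and> s \<in> N - {t} \<and> s' \<in> N - {t}
       \<and> u \<in> X s \<and> v \<in> X s' \<and> (s, s') \<notin> (adj_rel ET (N - {t}))\<^sup>*}"
    using h by blast
  then have "card ((\<lambda>b. {a,b}) ` D) \<le> cross E N ET X t"
    unfolding cross_def by (rule card_mono[rotated]) (use fin in auto)
  then show ?thesis using card_image[OF inj] by simp
qed

lemma lower: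
  assumes tcd: "tree_cut_dec (KV n k) (KE n k) N ET X" and th: "thickness N X \<le> \<alpha>"
    and n: "n = Suc \<alpha>"
  shows "k \<le> 2 * crossing_number (KE n k) N ET X + 2 * \<alpha>"
proof -
  define cn where "cn = crossing_number (KE n k) N ET X"
  have T: "is_tree N ET" using tcd unfolding tree_cut_dec_def by blast
  have fin: "finite N" using T unfolding is_tree_def by blast
  have cover: "(\<Union>t\<in>N. X t) = KV n k" using tcd unfolding tree_cut_dec_def by blast
  have cardX: "card (X t) \<le> \<alpha>" if "t \<in> N" for t
  proof -
    have "card (X t) \<le> thickness N X" unfolding thickness_def using fin that by (intro Max_ge) auto
    then show ?thesis using th by simp
  qed
  have finX: "finite (X t)" if "t \<in> N" for t
  proof -
    have "X t \<subseteq> KV n k" using cover that by blast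
    then show ?thesis by (rule finite_subset) (simp add: KV_def)
  qed
  have cnge: "cross (KE n k) N ET X t \<le> cn" if "t \<in> N" for t
    unfolding cn_def crossing_number_def using fin that by (intro Max_ge) auto
  have inV: "\<exists>s\<in>N. v \<in> X s" if "v < n + k" for v
  proof -
    have "v \<in> KV n k" using that by (simp add: KV_def)
    then show ?thesis using cover by blast
  qed
  obtain p where p: "p \<in> N" "0 \<in> X p" using inV[of 0] n by auto
  obtain a' where a': "a' < n" "a' \<notin> X p"
  proof (rule ccontr)
    assume "\<not> thesis"
    then have "{..<n} \<subseteq> X p" using that by blast
    then have "card {..<n} \<le> card (X p)" by (rule card_mono[OF finX[OF p(1)]])
    then have "n \<le> card (X p)" by simp
    then show False using cardX[OF p(1)] n by simp
  qed
  obtain q where q: "q \<in> N" "a' \<in> X q" using inV[of a'] a' by auto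
  have pq: "p \<noteq> q" using a' q by auto
  define B where "B = {n..<n+k}"
  have cB: "card B = k" by (simp add: B_def)
  have EB: "{a,b} \<in> KE n k" if "a < n" "b \<in> B" for a b
    unfolding KE_mem using that by (intro exI[of _ a] exI[of _ b]) (simp add: B_def)
  have EB': "{b,a} \<in> KE n k" if "a < n" "b \<in> B" for a b
    using EB[OF that] by (metis insert_commute)
  have nB: "a \<notin> D" if "a < n" "D \<subseteq> B" for a D
  proof
    assume "a \<in> D"
    then have "a \<in> B" using that by blast
    then show False using that by (simp add: B_def)
  qed
  show ?thesis
  proof (cases "{p,q} \<in> ET")
    case False
    obtain t where t: "t \<in> N" "t \<noteq> p" "t \<noteq> q" "(p,q) \<notin> (adj_rel ET (N-{t}))\<^sup>*"
      using sep_nonadj[OF T p(1) q(1) pq False] by blast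
    define B' where "B' = B - X t"
    have cB': "k - \<alpha> \<le> card B'"
      using diff_card_le_card_Diff[OF finX[OF t(1)], of B] cardX[OF t(1)] cB unfolding B'_def by linarith
    define D1 where "D1 = {b\<in>B'. \<exists>s\<in>N-{t}. b \<in> X s \<and> (p,s) \<notin> (adj_rel ET (N-{t}))\<^sup>*}"
    define D2 where "D2 = B' - D1"
    have "card D1 \<le> cross (KE n k) N ET X t"
    proof (rule cross_ge[OF KE_fin, of 0])
      show "0 \<notin> D1" using nB[of 0 D1] n by (auto simp: D1_def B'_def)
      fix b assume b: "b \<in> D1"
      then obtain s where s: "s\<in>N-{t}" "b \<in> X s" "(p,s) \<notin> (adj_rel ET (N-{t}))\<^sup>*"
        unfolding D1_def by blast
      have "b \<in> B" using b by (auto simp: D1_def B'_def)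
      then show "{0,b} \<in> KE n k \<and> (\<exists>u v s s'. {0,b} = {u,v} \<and> s\<in>N-{t} \<and> s'\<in>N-{t}
              \<and> u\<in>X s \<and> v \<in> X s' \<and> (s,s') \<notin> (adj_rel ET (N-{t}))\<^sup>*)"
        using EB[of 0 b] n s p t by blast
    qed
    moreover have "card D2 \<le> cross (KE n k) N ET X t"
    proof (rule cross_ge[OF KE_fin, of a'])
      show "a' \<notin> D2" using nB[of a' D2] a' by (auto simp: D2_def B'_def)
      fix b assume b: "b \<in> D2"
      then have bB: "b \<in> B" "b \<notin> X t" by (auto simp: D2_def B'_def)
      then obtain s where s: "s \<in> N" "b \<in> X s" using inV by (auto simp: B_def)
      have st: "s \<noteq> t" using s bB by auto
      then have "(p,s) \<in> (adj_rel ET (N-{t}))\<^sup>*" using b s bB unfolding D2_def D1_def B'_def by blast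
      then have "(s,q) \<notin> (adj_rel ET (N-{t}))\<^sup>*" using t(4) by (meson rtrancl_trans)
      then show "{a',b} \<in> KE n k \<and> (\<exists>u v s s'. {a',b} = {u,v} \<and> s\<in>N-{t} \<and> s'\<in>N-{t}
              \<and> u\<in>X s \<and> v \<in> X s' \<and> (s,s') \<notin> (adj_rel ET (N-{t}))\<^sup>*)"
        using EB[OF a'(1) bB(1)] s st q t
        using insert_commute[of a' b "{}"] by blast
    qed
    moreover have "card B' = card D1 + card D2"
    proof -
      have "finite B'" by (simp add: B'_def B_def)
      moreover have "D1 \<subseteq> B'" by (auto simp: D1_def)
      ultimately show ?thesis unfolding D2_def
        using card_Diff_subset[of D1 B'] card_mono[of B' D1] finite_subset[of D1 B'] by simp
    qed
    ultimately have "card B' \<le> 2 * cn" using cnge[OF t(1)] by linarith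
    then show ?thesis using cB' unfolding cn_def by linarith
  next
    case True
    define B' where "B' = B - X p - X q"
    have cB': "k - 2 * \<alpha> \<le> card B'"
    proof -
      have "card B - card (X p) \<le> card (B - X p)" by (rule diff_card_le_card_Diff[OF finX[OF p(1)]])
      moreover have "card (B - X p) - card (X q) \<le> card B'"
        unfolding B'_def by (rule diff_card_le_card_Diff[OF finX[OF q(1)]])
      ultimately show ?thesis using cardX[OF p(1)] cardX[OF q(1)] cB by linarith
    qed
    define D1 where "D1 = {b\<in>B'. \<exists>s\<in>N-{p}. b \<in> X s \<and> (s,q) \<notin> (adj_rel ET (N-{p}))\<^sup>*}"
    define D2 where "D2 = B' - D1"
    have "card D1 \<le> cross (KE n k) N ET X p"
    proof (rule cross_ge[OF KE_fin, of a'])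
      show "a' \<notin> D1" using nB[of a' D1] a' by (auto simp: D1_def B'_def)
      fix b assume b: "b \<in> D1"
      then obtain s where s: "s\<in>N-{p}" "b \<in> X s" "(s,q) \<notin> (adj_rel ET (N-{p}))\<^sup>*"
        unfolding D1_def by blast
      have bB: "b \<in> B" using b by (auto simp: D1_def B'_def)
      show "{a',b} \<in> KE n k \<and> (\<exists>u v s s'. {a',b} = {u,v} \<and> s\<in>N-{p} \<and> s'\<in>N-{p}
              \<and> u\<in>X s \<and> v \<in> X s' \<and> (s,s') \<notin> (adj_rel ET (N-{p}))\<^sup>*)"
        using EB[OF a'(1) bB] s q pq
        using insert_commute[of a' b "{}"] by blast
    qed
    moreover have "card D2 \<le> cross (KE n k) N ET X q"
    proof (rule cross_ge[OF KE_fin, of 0])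
      show "0 \<notin> D2" using nB[of 0 D2] n by (auto simp: D2_def B'_def)
      fix b assume b: "b \<in> D2"
      then have bB: "b \<in> B" "b \<notin> X p" "b \<notin> X q" by (auto simp: D2_def B'_def)
      then obtain s where s: "s \<in> N" "b \<in> X s" using inV by (auto simp: B_def)
      have sp: "s \<noteq> p" "s \<noteq> q" using s bB by auto
      then have "(s,q) \<in> (adj_rel ET (N-{p}))\<^sup>*" using b s bB unfolding D2_def D1_def B'_def by blast
      then have "(s,p) \<notin> (adj_rel ET (N-{q}))\<^sup>*" using sep_adj[OF T True] by blast
      then show "{0,b} \<in> KE n k \<and> (\<exists>u v s s'. {0,b} = {u,v} \<and> s\<in>N-{q} \<and> s'\<in>N-{q}
              \<and> u\<in>X s \<and> v \<in> X s' \<and> (s,s') \<notin> (adj_rel ET (N-{q}))\<^sup>*)"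
        using EB[OF _ bB(1), of 0] n s sp p pq
        using insert_commute[of 0 b "{}"] by blast
    qed
    moreover have "card B' = card D1 + card D2"
    proof -
      have "finite B'" by (simp add: B'_def B_def)
      moreover have "D1 \<subseteq> B'" by (auto simp: D1_def)
      ultimately show ?thesis unfolding D2_def
        using card_Diff_subset[of D1 B'] card_mono[of B' D1] finite_subset[of D1 B'] by simp
    qed
    ultimately have "card B' \<le> 2 * cn" using cnge[OF p(1)] cnge[OF q(1)] by linarith
    then show ?thesis using cB' unfolding cn_def by linarith
  qed
qed

theorem lemma3p4:
  fixes \<alpha> \<beta> :: nat
  assumes "0 < \<alpha>" and "\<alpha> < \<beta>"
  shows "\<not> (\<exists>f :: nat \<Rightarrow> nat. \<forall>V E. graph V E \<longrightarrow> ecrw \<alpha> V E \<le> f (ecrw \<beta> V E))"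
proof
  assume "\<exists>f :: nat \<Rightarrow> nat. \<forall>V E. graph V E \<longrightarrow> ecrw \<alpha> V E \<le> f (ecrw \<beta> V E)"
  then obtain f :: "nat \<Rightarrow> nat" where f: "\<And>V E. graph V E \<Longrightarrow> ecrw \<alpha> V E \<le> f (ecrw \<beta> V E)" by blast
  define n where "n = Suc \<alpha>"
  define k where "k = 2 * f 0 + 2 * \<alpha> + 2"
  have up: "ecrw \<beta> (KV n k) (KE n k) = 0" using assms by (intro upper) (auto simp: n_def)
  have "f 0 + 1 \<le> ecrw \<alpha> (KV n k) (KE n k)"
    unfolding ecrw_def
  proof (rule cInf_greatest)
    show "{crossing_number (KE n k) N ET X | N ET X.
       tree_cut_dec (KV n k) (KE n k) N ET X \<and> thickness N X \<le> \<alpha>} \<noteq> {}"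
      using nonempty assms by simp
    fix c assume "c \<in> {crossing_number (KE n k) N ET X | N ET X.
       tree_cut_dec (KV n k) (KE n k) N ET X \<and> thickness N X \<le> \<alpha>}"
    then obtain N ET X where c: "c = crossing_number (KE n k) N ET X"
      "tree_cut_dec (KV n k) (KE n k) N ET X" "thickness N X \<le> \<alpha>" by blast
    have "k \<le> 2 * c + 2 * \<alpha>" using lower[OF c(2) c(3) n_def] c(1) by simp
    then show "f 0 + 1 \<le> c" unfolding k_def by linarith
  qed
  moreover have "ecrw \<alpha> (KV n k) (KE n k) \<le> f 0" using f[OF K_graph[of n k]] up by simp
  ultimately show False by simp
qed

end
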